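(* If $G$ is a unicyclic graph of order $n\ge 3$, then $N(G)\ge \frac{n^2+3n-4}{2}$, with equality if and only if $G$ is isomorphic to the tadpole graph $G_{3,n-3}$.
   Context: A unicyclic graph is a connected finite simple graph containing exactly one cycle. $N(G)$ denotes the number of nonempty vertex sets $S\subseteq V(G)$ such that the induced subgraph $G[S]$ is connected. The tadpole graph $G_{p,q}$ is the graph of order $p+q$ obtained by identifying a vertex of the cycle $C_p$ with an endpoint of the path on $q+1$ vertices; in particular $G_{3,n-3}$ is obtained by identifying a vertex of a triangle $K_3$ with an endpoint of the path on $n-2$ vertices. *)

theory Defs
  imports Complex_Main
begin

definition simple_graph :: "'a set \<Rightarrow> 'a set set \<Rightarrow> bool" where
  "simple_graph V E \<longleftrightarrow> finite V \<and>
     (\<forall>e\<in>E. \<exists>u v. e = {u, v} \<and> u \<noteq> v \<and> u \<in> V \<and> v \<in> V)"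

definition adj_in :: "'a set set \<Rightarrow> 'a set \<Rightarrow> ('a \<times> 'a) set" where
  "adj_in E S = {(x, y). x \<in> S \<and> y \<in> S \<and> {x, y} \<in> E}"

definition connected_set :: "'a set set \<Rightarrow> 'a set \<Rightarrow> bool" where
  "connected_set E S \<longleftrightarrow> S \<noteq> {} \<and> (\<forall>u\<in>S. \<forall>v\<in>S. (u, v) \<in> (adj_in E S)\<^sup>*)"

definition N_conn :: "'a set \<Rightarrow> 'a set set \<Rightarrow> nat" where
  "N_conn V E = card {S. S \<subseteq> V \<and> connected_set E S}"

text \<open>A cycle of the graph, identified with its (nonempty, finite) edge set F \<subseteq> E:
  the subgraph formed by F is connected and every vertex on it has degree exactly 2.\<close>
definition is_cycle :: "'a set set \<Rightarrow> 'a set set \<Rightarrow> bool" where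
  "is_cycle E F \<longleftrightarrow> F \<subseteq> E \<and> F \<noteq> {} \<and> finite F \<and>
     connected_set F (\<Union>F) \<and> (\<forall>v\<in>\<Union>F. card {e\<in>F. v \<in> e} = 2)"

definition unicyclic :: "'a set \<Rightarrow> 'a set set \<Rightarrow> bool" where
  "unicyclic V E \<longleftrightarrow> simple_graph V E \<and> connected_set E V \<and> (\<exists>!F. is_cycle E F)"

text \<open>Tadpole graph G_{p,q} on vertices 0..p+q-1: cycle 0,1,...,p-1 and path p-1,p,...,p+q-1.\<close>
definition tadpole_V :: "nat \<Rightarrow> nat \<Rightarrow> nat set" where
  "tadpole_V p q = {0..<p+q}"

definition tadpole_E :: "nat \<Rightarrow> nat \<Rightarrow> nat set set" where
  "tadpole_E p q = {{i, (i + 1) mod p} | i. i < p} \<union> {{i, i + 1} | i. p - 1 \<le> i \<and> i + 1 < p + q}"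

definition graph_iso :: "'a set \<Rightarrow> 'a set set \<Rightarrow> 'b set \<Rightarrow> 'b set set \<Rightarrow> bool" where
  "graph_iso V E V' E' \<longleftrightarrow> (\<exists>f. bij_betw f V V' \<and>
     (\<forall>u\<in>V. \<forall>v\<in>V. {u, v} \<in> E \<longleftrightarrow> {f u, f v} \<in> E'))"

end

theory Submission
  imports Defs
begin


lemma conn_single: "connected_set E {a}"
  unfolding connected_set_def by auto

lemma adj_in_mono_E: "F \<subseteq> E \<Longrightarrow> adj_in F S \<subseteq> adj_in E S"
  unfolding adj_in_def by auto

lemma conn_mono_E: "F \<subseteq> E \<Longrightarrow> connected_set F S \<Longrightarrow> connected_set E S"
  unfolding connected_set_def using adj_in_mono_E[of F E S] rtrancl_mono[of "adj_in F S" "adj_in E S"] by blast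

lemma adj_in_cong:
  assumes "\<forall>x\<in>S. \<forall>y\<in>S. {x,y} \<in> E \<longleftrightarrow> {x,y} \<in> E'"
  shows "adj_in E S = adj_in E' S"
  using assms unfolding adj_in_def by blast

lemma conn_cong:
  assumes "\<forall>x\<in>S. \<forall>y\<in>S. {x,y} \<in> E \<longleftrightarrow> {x,y} \<in> E'"
  shows "connected_set E S = connected_set E' S"
  unfolding connected_set_def using adj_in_cong[OF assms] by simp

lemma adj_in_mono_S: "S \<subseteq> T \<Longrightarrow> adj_in E S \<subseteq> adj_in E T"
  unfolding adj_in_def by auto

lemma conn_insert:
  assumes c: "connected_set E S" and y: "y \<in> S" and e: "{x,y} \<in> E"
  shows "connected_set E (insert x S)"
proof -
  let ?R = "adj_in E (insert x S)"
  have sub: "(adj_in E S)\<^sup>* \<subseteq> ?R\<^sup>*"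
    by (rule rtrancl_mono, rule adj_in_mono_S) auto
  have e2: "{y,x} \<in> E" using e by (simp add: insert_commute)
  have xy: "(x,y) \<in> ?R" "(y,x) \<in> ?R" using y e e2 unfolding adj_in_def by auto
  have S: "\<And>u v. u\<in>S \<Longrightarrow> v\<in>S \<Longrightarrow> (u,v) \<in> ?R\<^sup>*" using c sub unfolding connected_set_def by blast
  have yv: "(y, v) \<in> ?R\<^sup>*" if v: "v \<in> insert x S" for v
  proof (cases "v = x")
    case True then show ?thesis using xy by auto
  next
    case False then show ?thesis using v S y by auto
  qed
  have uy: "(u, y) \<in> ?R\<^sup>*" if u: "u \<in> insert x S" for u
  proof (cases "u = x")
    case True then show ?thesis using xy by auto
  next
    case False then show ?thesis using u S y by auto
  qed
  show ?thesis unfolding connected_set_def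
  proof (intro conjI ballI)
    fix u v assume "u \<in> insert x S" "v \<in> insert x S"
    then show "(u,v) \<in> ?R\<^sup>*" using uy yv by (meson rtrancl_trans)
  qed simp
qed

lemma outside_nbr_aux:
  assumes "(a,b) \<in> (adj_in E V)\<^sup>*" "a \<in> T"
  shows "b \<in> T \<or> (\<exists>x\<in>V - T. \<exists>y\<in>T. {x,y} \<in> E)"
  using assms(1)
proof (induction rule: rtrancl_induct)
  case base then show ?case using assms(2) by simp
next
  case (step b c)
  show ?case
  proof (cases "b \<in> T")
    case True
    show ?thesis
    proof (cases "c \<in> T")
      case False
      have "c \<in> V" "{b,c} \<in> E" using step(2) unfolding adj_in_def by auto
      then have "{c,b} \<in> E" by (simp add: insert_commute)
      then show ?thesis using False True \<open>c \<in> V\<close> by blast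
    qed simp
  next
    case False
    then show ?thesis using step(3) by blast
  qed
qed

lemma outside_nbr:
  assumes "connected_set E V" "T \<subseteq> V" "T \<noteq> {}" "T \<noteq> V"
  shows "\<exists>x\<in>V - T. \<exists>y\<in>T. {x,y} \<in> E"
proof -
  obtain a where a: "a \<in> T" using assms by auto
  obtain b where b: "b \<in> V" "b \<notin> T" using assms by auto
  have "(a,b) \<in> (adj_in E V)\<^sup>*" using assms(1,2) a b unfolding connected_set_def by auto
  from outside_nbr_aux[OF this a] b(2) show ?thesis by simp
qed



definition cnt :: "'a set set \<Rightarrow> 'a set \<Rightarrow> 'a set \<Rightarrow> nat" where
  "cnt E V S0 = card {T. T \<subseteq> V \<and> connected_set E T \<and> S0 \<subseteq> T}"

lemma chain_exists:
  assumes fin: "finite V" and cV: "connected_set E V" and "S0 \<subseteq> V" "connected_set E S0"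
  shows "\<exists>S. S 0 = S0 \<and> (\<forall>k. S k \<subseteq> S (Suc k)) \<and>
     (\<forall>k. S k \<subseteq> V \<and> connected_set E (S k) \<and> card (S k) = min (card S0 + k) (card V))"
proof -
  obtain d where "d = card V - card S0" by simp
  then show ?thesis using assms(3,4)
  proof (induction d arbitrary: S0)
    case 0
    then have "card V \<le> card S0" by simp
    then have eq: "S0 = V" using 0 fin by (meson card_seteq)
    show ?case
      by (rule exI[of _ "\<lambda>_. V"]) (use eq cV in auto)
  next
    case (Suc d)
    have fS0: "finite S0" using Suc.prems(2) fin finite_subset by blast
    have "S0 \<noteq> V" using Suc.prems(1) by auto
    moreover have "S0 \<noteq> {}" using Suc.prems(3) unfolding connected_set_def by simp
    ultimately obtain x y where x: "x \<in> V - S0" and y: "y \<in> S0" and e: "{x,y} \<in> E"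
      using outside_nbr[OF cV Suc.prems(2)] by blast
    let ?S1 = "insert x S0"
    have c1: "connected_set E ?S1" using conn_insert[OF Suc.prems(3) y e] .
    have card1: "card ?S1 = card S0 + 1" using x fS0 by simp
    have dS1: "d = card V - card ?S1" using Suc.prems(1) card1 by simp
    have sub1: "?S1 \<subseteq> V" using x Suc.prems(2) by blast
    from Suc.IH[OF dS1 sub1 c1] obtain S' where
      S': "S' 0 = ?S1 \<and> (\<forall>k. S' k \<subseteq> S' (Suc k)) \<and>
      (\<forall>k. S' k \<subseteq> V \<and> connected_set E (S' k) \<and> card (S' k) = min (card ?S1 + k) (card V))"
      by (rule exE)
    let ?S = "\<lambda>k. case k of 0 \<Rightarrow> S0 | Suc k' \<Rightarrow> S' k'"
    have cle: "card S0 \<le> card V" using Suc.prems(2) fin card_mono by blast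
    have m1: "?S k \<subseteq> ?S (Suc k)" for k
    proof (cases k)
      case 0 then show ?thesis using S' by auto
    next
      case (Suc k') then show ?thesis using S' by simp
    qed
    have m2: "?S k \<subseteq> V \<and> connected_set E (?S k) \<and> card (?S k) = min (card S0 + k) (card V)" for k
    proof (cases k)
      case 0 then show ?thesis using Suc.prems(2,3) cle by simp
    next
      case (Suc k')
      have "card S0 + k = card ?S1 + k'" using card1 Suc by simp
      then show ?thesis using S' Suc by simp
    qed
    show ?case
      by (rule exI[of _ ?S]) (use m1 m2 in simp)
  qed
qed

lemma chain_mono:
  assumes "\<forall>k. S k \<subseteq> S (Suc k)" "k \<le> l"
  shows "S k \<subseteq> S l"
  using lift_Suc_mono_le[of S k l] assms by blast

lemma noncut:
  assumes fin: "finite V" and cV: "connected_set E V" and S0: "S0 \<subseteq> V" "connected_set E S0" and ne: "S0 \<noteq> V"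
  shows "\<exists>w\<in>V - S0. connected_set E (V - {w})"
proof -
  obtain S where S: "S 0 = S0" "\<forall>k. S k \<subseteq> S (Suc k)"
      "\<forall>k. S k \<subseteq> V \<and> connected_set E (S k) \<and> card (S k) = min (card S0 + k) (card V)"
    using chain_exists[OF fin cV S0] by blast
  have lt: "card S0 < card V" using psubset_card_mono[OF fin] S0 ne by blast
  define d where "d = card V - card S0 - 1"
  have cd: "card (S d) = card V - 1" using S(3) lt unfolding d_def by simp
  have sub: "S d \<subseteq> V" using S(3) by blast
  have s0: "S0 \<subseteq> S d" using chain_mono[OF S(2), of 0 d] S(1) by simp
  have "card (V - S d) = 1" using card_Diff_subset[OF finite_subset[OF sub fin] sub] cd lt by simp
  then obtain w where w: "V - S d = {w}" using card_1_singletonE by blast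
  then have "S d = V - {w}" using sub by blast
  moreover have "w \<in> V - S0" using w s0 by blast
  ultimately show ?thesis using S(3) by metis
qed

lemma count_lb:
  assumes fin: "finite V" and cV: "connected_set E V" and S0: "S0 \<subseteq> V" "connected_set E S0"
    and D: "D \<subseteq> {card S0..card V}"
    and two: "\<And>k. k\<in>D \<Longrightarrow> \<exists>T1 T2. T1 \<noteq> T2 \<and> T1 \<subseteq> V \<and> connected_set E T1 \<and> S0 \<subseteq> T1 \<and> card T1 = k
                \<and> T2 \<subseteq> V \<and> connected_set E T2 \<and> S0 \<subseteq> T2 \<and> card T2 = k"
  shows "card V - card S0 + 1 + card D \<le> cnt E V S0"
proof -
  define A where "A k = {T. T \<subseteq> V \<and> connected_set E T \<and> S0 \<subseteq> T \<and> card T = k}" for k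
  define I where "I = {card S0..card V}"
  define Fam where "Fam = {T. T \<subseteq> V \<and> connected_set E T \<and> S0 \<subseteq> T}"
  have finFam: "finite Fam" unfolding Fam_def using fin by (simp add: finite_subset[of _ "Pow V"] subset_eq)
  have finA: "finite (A k)" for k unfolding A_def using fin by (simp add: finite_subset[of _ "Pow V"] subset_eq)
  have sub: "(\<Union>k\<in>I. A k) \<subseteq> Fam" unfolding A_def Fam_def by blast
  have disj: "\<forall>i\<in>I. \<forall>j\<in>I. i \<noteq> j \<longrightarrow> A i \<inter> A j = {}" unfolding A_def by blast
  have cU: "card (\<Union>k\<in>I. A k) = (\<Sum>k\<in>I. card (A k))"
    using card_UN_disjoint[of I A] finA disj unfolding I_def by simp
  obtain S where S: "S 0 = S0" "\<forall>k. S k \<subseteq> S (Suc k)"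
      "\<forall>k. S k \<subseteq> V \<and> connected_set E (S k) \<and> card (S k) = min (card S0 + k) (card V)"
    using chain_exists[OF fin cV S0] by blast
  have ge1: "1 \<le> card (A k)" if k: "k \<in> I" for k
  proof -
    have "S (k - card S0) \<in> A k"
      using S(3) k chain_mono[OF S(2), of 0 "k - card S0"] S(1) unfolding A_def I_def by auto
    then have "A k \<noteq> {}" by blast
    then have "0 < card (A k)" using finA[of k] card_gt_0_iff by blast
    then show ?thesis by simp
  qed
  have ge2: "2 \<le> card (A k)" if k: "k \<in> D" for k
  proof -
    obtain T1 T2 where "T1 \<noteq> T2" "T1 \<subseteq> V \<and> connected_set E T1 \<and> S0 \<subseteq> T1 \<and> card T1 = k"
       "T2 \<subseteq> V \<and> connected_set E T2 \<and> S0 \<subseteq> T2 \<and> card T2 = k" using two[OF k] by blast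
    then have "T1 \<noteq> T2" "T1 \<in> A k" "T2 \<in> A k" unfolding A_def by auto
    then have "card {T1,T2} \<le> card (A k)" using finA[of k] by (intro card_mono) auto
    then show ?thesis using \<open>T1 \<noteq> T2\<close> by simp
  qed
  have "(\<Sum>k\<in>I. (if k \<in> D then 2 else 1)) \<le> (\<Sum>k\<in>I. card (A k))"
    by (rule sum_mono) (use ge1 ge2 in auto)
  moreover have "(\<Sum>k\<in>I. (if k \<in> D then 2 else (1::nat))) = card I + card D"
  proof -
    have fI: "finite I" unfolding I_def by simp
    have "(\<Sum>k\<in>I. (if k \<in> D then 2 else (1::nat))) = (\<Sum>k\<in>I. 1 + (if k \<in> D then 1 else 0))"
      by (rule sum.cong) auto
    also have "\<dots> = card I + (\<Sum>k\<in>I. (if k \<in> D then 1 else 0))"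
      by (simp only: sum.distrib) simp
    also have "(\<Sum>k\<in>I. (if k \<in> D then 1 else (0::nat))) = card (I \<inter> D)"
      using fI by (simp add: sum.If_cases)
    also have "I \<inter> D = D" using D unfolding I_def by blast
    finally show ?thesis .
  qed
  moreover have "card I = card V - card S0 + 1"
    using card_mono[OF fin S0(1)] unfolding I_def by simp
  moreover have "card (\<Union>k\<in>I. A k) \<le> card Fam" using card_mono[OF finFam sub] .
  ultimately show ?thesis unfolding cnt_def Fam_def[symmetric] using cU by linarith
qed



lemma finite_fam: "finite V \<Longrightarrow> finite {T. T \<subseteq> V \<and> P T}"
  by (rule finite_subset[of _ "Pow V"]) auto

lemma N_split:
  assumes fin: "finite V" and z: "z \<in> V"
  shows "N_conn V E = N_conn (V - {z}) E + cnt E V {z}"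
proof -
  have eq: "{S. S \<subseteq> V \<and> connected_set E S} =
     {S. S \<subseteq> V - {z} \<and> connected_set E S} \<union> {T. T \<subseteq> V \<and> connected_set E T \<and> {z} \<subseteq> T}"
    by blast
  have "card ({S. S \<subseteq> V - {z} \<and> connected_set E S} \<union> {T. T \<subseteq> V \<and> connected_set E T \<and> {z} \<subseteq> T})
     = card {S. S \<subseteq> V - {z} \<and> connected_set E S} + card {T. T \<subseteq> V \<and> connected_set E T \<and> {z} \<subseteq> T}"
    by (rule card_Un_disjoint) (use fin finite_fam[of V] finite_fam[of "V - {z}"] in auto)
  then show ?thesis unfolding N_conn_def cnt_def eq by simp
qed

lemma cnt_split:
  assumes fin: "finite V"
  shows "cnt E V S0 = cnt E (V - {z}) S0 + cnt E V (insert z S0)"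
proof -
  have eq: "{T. T \<subseteq> V \<and> connected_set E T \<and> S0 \<subseteq> T} =
     {T. T \<subseteq> V - {z} \<and> connected_set E T \<and> S0 \<subseteq> T} \<union> {T. T \<subseteq> V \<and> connected_set E T \<and> insert z S0 \<subseteq> T}"
    by blast
  have "card ({T. T \<subseteq> V - {z} \<and> connected_set E T \<and> S0 \<subseteq> T} \<union> {T. T \<subseteq> V \<and> connected_set E T \<and> insert z S0 \<subseteq> T})
     = card {T. T \<subseteq> V - {z} \<and> connected_set E T \<and> S0 \<subseteq> T} + card {T. T \<subseteq> V \<and> connected_set E T \<and> insert z S0 \<subseteq> T}"
    by (rule card_Un_disjoint) (use fin finite_fam[of V] finite_fam[of "V - {z}"] in auto)
  then show ?thesis unfolding cnt_def eq by simp
qed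

lemma cong_cnt_N:
  assumes "\<forall>x\<in>V. \<forall>y\<in>V. {x,y} \<in> E \<longleftrightarrow> {x,y} \<in> E'"
  shows "cnt E V S0 = cnt E' V S0" "N_conn V E = N_conn V E'"
proof -
  have c: "T \<subseteq> V \<Longrightarrow> connected_set E T = connected_set E' T" for T
    by (rule conn_cong) (use assms in blast)
  have "{T. T \<subseteq> V \<and> connected_set E T \<and> S0 \<subseteq> T} = {T. T \<subseteq> V \<and> connected_set E' T \<and> S0 \<subseteq> T}"
    using c by blast
  then show "cnt E V S0 = cnt E' V S0" unfolding cnt_def by simp
  have "{T. T \<subseteq> V \<and> connected_set E T} = {T. T \<subseteq> V \<and> connected_set E' T}"
    using c by blast
  then show "N_conn V E = N_conn V E'" unfolding N_conn_def by simp
qed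

lemma leaf_remove_conn:
  assumes cV: "connected_set E V" and z: "z \<in> V" and yz: "y \<noteq> z"
    and leaf: "\<forall>x\<in>V. {z,x} \<in> E \<longrightarrow> x = y" and ne: "V - {z} \<noteq> {}"
  shows "connected_set E (V - {z})"
proof -
  let ?R = "adj_in E (V - {z})"
  have main: "(c \<noteq> z \<longrightarrow> (a,c) \<in> ?R\<^sup>*) \<and> (c = z \<longrightarrow> (a,y) \<in> ?R\<^sup>*)"
    if ac: "(a,c) \<in> (adj_in E V)\<^sup>*" and a: "a \<noteq> z" for a c
    using ac
  proof (induction rule: rtrancl_induct)
    case base then show ?case using a by simp
  next
    case (step c d)
    have cd: "c \<in> V" "d \<in> V" "{c,d} \<in> E" using step(2) unfolding adj_in_def by auto
    have dc: "{d,c} \<in> E" using cd(3) by (simp add: insert_commute)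
    show ?case
    proof (cases "c = z")
      case True
      then have "d = y" using leaf cd by blast
      then show ?thesis using True step(3) yz by simp
    next
      case False
      show ?thesis
      proof (cases "d = z")
        case True
        then have "c = y" using leaf cd dc by blast
        then show ?thesis using True step(3) False by simp
      next
        case dF: False
        have "(c,d) \<in> ?R" using cd False dF unfolding adj_in_def by auto
        then show ?thesis using step(3) False dF by simp
      qed
    qed
  qed
  show ?thesis unfolding connected_set_def
  proof (intro conjI ballI)
    show "V - {z} \<noteq> {}" using ne .
  next
    fix a b assume a: "a \<in> V - {z}" and b: "b \<in> V - {z}"
    then have "(a,b) \<in> (adj_in E V)\<^sup>*" using cV unfolding connected_set_def by blast
    then show "(a,b) \<in> ?R\<^sup>*" using main a b by blast
  qed
qed

lemma leaf_cnt:
  assumes fin: "finite V" and z: "z \<in> V" and y: "y \<in> V" "y \<noteq> z" and e: "{z,y} \<in> E"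
    and leaf: "\<forall>x\<in>V. {z,x} \<in> E \<longrightarrow> x = y"
  shows "cnt E V {z} = 1 + cnt E (V - {z}) {y}"
proof -
  define Fam where "Fam = {T. T \<subseteq> V \<and> connected_set E T \<and> {z} \<subseteq> T}"
  define Fam' where "Fam' = {T. T \<subseteq> V - {z} \<and> connected_set E T \<and> {y} \<subseteq> T}"
  have eq: "Fam = insert {z} (insert z ` Fam')"
  proof (intro equalityI subsetI)
    fix T assume T: "T \<in> Fam"
    show "T \<in> insert {z} (insert z ` Fam')"
    proof (cases "T = {z}")
      case True then show ?thesis by simp
    next
      case False
      have Tsub: "T \<subseteq> V" and cT: "connected_set E T" and zT: "z \<in> T" using T unfolding Fam_def by auto
      have ne: "T - {z} \<noteq> {}" using False zT by blast
      obtain x w where x: "x \<in> T - {z}" and w: "w \<in> {z}" and xw: "{x,w} \<in> E"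
        using outside_nbr[OF cT, of "{z}"] zT False by blast
      have "{z,x} \<in> E" using xw w by (simp add: insert_commute)
      then have "x = y" using leaf x Tsub by blast
      then have yT: "y \<in> T" using x by blast
      have leafT: "\<forall>x\<in>T. {z,x} \<in> E \<longrightarrow> x = y" using leaf Tsub by blast
      have "connected_set E (T - {z})" using leaf_remove_conn[OF cT zT y(2) leafT ne] .
      then have "T - {z} \<in> Fam'" unfolding Fam'_def using Tsub yT y(2) by blast
      moreover have "T = insert z (T - {z})" using zT by blast
      ultimately show ?thesis by blast
    qed
  next
    fix T assume "T \<in> insert {z} (insert z ` Fam')"
    then show "T \<in> Fam"
    proof
      assume "T = {z}" then show ?thesis unfolding Fam_def using z conn_single by auto
    next
      assume "T \<in> insert z ` Fam'"
      then obtain T' where T': "T' \<in> Fam'" "T = insert z T'" by blast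
      have "connected_set E (insert z T')" using conn_insert[of E T' y z] T' e unfolding Fam'_def by auto
      then show ?thesis using T' z unfolding Fam_def Fam'_def by auto
    qed
  qed
  have finF': "finite Fam'" unfolding Fam'_def using finite_fam[of "V - {z}"] fin by simp
  have inj: "inj_on (insert z) Fam'" unfolding Fam'_def inj_on_def by blast
  have notin: "{z} \<notin> insert z ` Fam'" unfolding Fam'_def using y(2) by blast
  have "card Fam = 1 + card Fam'"
    unfolding eq using notin finF' card_image[OF inj] by simp
  then show ?thesis unfolding cnt_def Fam_def Fam'_def by simp
qed

lemma conn_lb:
  assumes "finite V" "connected_set E V"
  shows "card V * (card V + 1) \<le> 2 * N_conn V E"
  using assms
proof (induction "card V" arbitrary: V)
  case 0 then show ?case by simp
next
  case (Suc m)
  obtain v0 where v0: "v0 \<in> V" using Suc.prems(2) unfolding connected_set_def by auto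
  show ?case
  proof (cases "V = {v0}")
    case True
    have "{S. S \<subseteq> V \<and> connected_set E S} = {{v0}}"
      using True conn_single unfolding connected_set_def by auto
    then show ?thesis unfolding N_conn_def using True by simp
  next
    case False
    have "{v0} \<subseteq> V" using v0 by simp
    from noncut[OF Suc.prems(1,2) this conn_single] False
    obtain w where w: "w \<in> V - {v0}" and cw: "connected_set E (V - {w})" by metis
    have cm: "card (V - {w}) = m" using Suc.hyps(2) w Suc.prems(1) by simp
    have IH: "m * (m + 1) \<le> 2 * N_conn (V - {w}) E"
      using Suc.hyps(1)[of "V - {w}"] cm cw Suc.prems(1) by simp
    have "card V - card {w} + 1 + card ({}::nat set) \<le> cnt E V {w}"
      by (rule count_lb[OF Suc.prems(1,2)]) (use w conn_single in auto)
    then have "Suc m \<le> cnt E V {w}" using Suc.hyps(2) by simp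
    moreover have "N_conn V E = N_conn (V - {w}) E + cnt E V {w}"
      using N_split[OF Suc.prems(1)] w by blast
    ultimately show ?thesis using IH Suc.hyps(2)[symmetric] by (simp add: algebra_simps)
  qed
qed



lemma simple_edge:
  assumes "simple_graph V E" "e \<in> E"
  shows "\<exists>u v. e = {u,v} \<and> u \<noteq> v \<and> u \<in> V \<and> v \<in> V"
  using assms unfolding simple_graph_def by blast

lemma edge_other:
  assumes "simple_graph V E" "e \<in> E" "v \<in> e"
  shows "\<exists>a. e = {v,a} \<and> a \<noteq> v \<and> a \<in> V \<and> v \<in> V"
proof -
  obtain p q where "e = {p,q}" "p \<noteq> q" "p \<in> V" "q \<in> V" using simple_edge[OF assms(1,2)] by blast
  then show ?thesis using assms(3) by (auto simp: insert_commute)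
qed

lemma cyc_sub:
  assumes "is_cycle E F" "simple_graph V E"
  shows "\<Union>F \<subseteq> V"
proof
  fix x assume "x \<in> \<Union>F"
  then obtain e where "e \<in> F" "x \<in> e" by blast
  then show "x \<in> V" using edge_other[OF assms(2), of e x] assms(1) unfolding is_cycle_def by blast
qed

lemma cyc_deg:
  assumes cyc: "is_cycle E F" and sg: "simple_graph V E" and v: "v \<in> \<Union>F"
  shows "\<exists>a b. a \<noteq> b \<and> a \<noteq> v \<and> b \<noteq> v \<and> {v,a} \<in> F \<and> {v,b} \<in> F \<and>
     (\<forall>e\<in>F. v \<in> e \<longrightarrow> e = {v,a} \<or> e = {v,b})"
proof -
  have "card {e\<in>F. v \<in> e} = 2" using cyc v unfolding is_cycle_def by blast
  then obtain e1 e2 where e12: "{e\<in>F. v \<in> e} = {e1,e2}" "e1 \<noteq> e2" by (meson card_2_iff)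
  have e1: "e1 \<in> F" "v \<in> e1" and e2: "e2 \<in> F" "v \<in> e2" using e12(1) by blast+
  have FE: "F \<subseteq> E" using cyc unfolding is_cycle_def by blast
  obtain a where a: "e1 = {v,a}" "a \<noteq> v" using edge_other[OF sg, of e1 v] e1 FE by blast
  obtain b where b: "e2 = {v,b}" "b \<noteq> v" using edge_other[OF sg, of e2 v] e2 FE by blast
  have "a \<noteq> b" using a b e12(2) by blast
  moreover have "\<forall>e\<in>F. v \<in> e \<longrightarrow> e = {v,a} \<or> e = {v,b}" using e12(1) a b by blast
  ultimately show ?thesis using a b e1 e2 by blast
qed

lemma cyc_nbr_in: "{v,a} \<in> F \<Longrightarrow> a \<in> \<Union>F" by blast

lemma cyc_card:
  assumes cyc: "is_cycle E F" and sg: "simple_graph V E"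
  shows "3 \<le> card (\<Union>F)"
proof -
  obtain e where e: "e \<in> F" using cyc unfolding is_cycle_def by blast
  have FE: "F \<subseteq> E" using cyc unfolding is_cycle_def by blast
  obtain p q where "e = {p,q}" using simple_edge[OF sg, of e] e FE by blast
  then have v: "p \<in> \<Union>F" using e by blast
  obtain a b where ab: "a \<noteq> b" "a \<noteq> p" "b \<noteq> p" "{p,a} \<in> F" "{p,b} \<in> F"
    using cyc_deg[OF cyc sg v] by blast
  have sub: "{p,a,b} \<subseteq> \<Union>F" using ab v by blast
  have fin: "finite (\<Union>F)" using cyc_sub[OF cyc sg] sg unfolding simple_graph_def
    using finite_subset by blast
  have "card {p,a,b} = 3" using ab by simp
  then show ?thesis using card_mono[OF fin sub] by simp
qed

lemma cyc_conn:
  assumes cyc: "is_cycle E F"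
  shows "connected_set E (\<Union>F)"
  using cyc unfolding is_cycle_def using conn_mono_E by blast



lemma chain_step:
  assumes fin: "finite V" and S: "\<forall>k. S k \<subseteq> S (Suc k)"
    "\<forall>k. S k \<subseteq> V \<and> connected_set E (S k) \<and> card (S k) = min (c + k) (card V)"
    and k: "c + k < card V"
  shows "\<exists>t. t \<notin> S k \<and> S (Suc k) = insert t (S k)"
proof -
  have sub: "S k \<subseteq> S (Suc k)" using S(1) by blast
  have f: "finite (S (Suc k))" using S(2) fin finite_subset by blast
  have ck: "card (S k) = c + k" "card (S (Suc k)) = c + k + 1" using S(2) k by auto
  have "card (S (Suc k) - S k) = 1" using card_Diff_subset[OF finite_subset[OF sub f] sub] ck by simp
  then obtain t where t: "S (Suc k) - S k = {t}" using card_1_singletonE by blast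
  then show ?thesis using sub by blast
qed

lemma cycle_dup:
  assumes fin: "finite V" and cV: "connected_set E V" and sg: "simple_graph V E"
    and cyc: "is_cycle E F" and u: "u \<in> V" and uC: "u \<notin> \<Union>F"
  shows "\<exists>b. 3 \<le> b \<and> b \<le> card V \<and> (\<exists>T1 T2. T1 \<noteq> T2 \<and> T1 \<subseteq> V \<and> connected_set E T1 \<and> {u} \<subseteq> T1 \<and> card T1 = b
           \<and> T2 \<subseteq> V \<and> connected_set E T2 \<and> {u} \<subseteq> T2 \<and> card T2 = b)"
proof -
  let ?C = "\<Union>F"
  have u0: "{u} \<subseteq> V" using u by simp
  obtain S where S0: "S 0 = {u}" and Sm: "\<forall>k. S k \<subseteq> S (Suc k)"
      and Sp': "\<forall>k. S k \<subseteq> V \<and> connected_set E (S k) \<and> card (S k) = min (card {u} + k) (card V)"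
    using chain_exists[OF fin cV u0 conn_single] by blast
  have Sp: "\<forall>k. S k \<subseteq> V \<and> connected_set E (S k) \<and> card (S k) = min (1 + k) (card V)"
    using Sp' by simp
  have CV: "?C \<subseteq> V" using cyc_sub[OF cyc sg] .
  have c3: "3 \<le> card ?C" using cyc_card[OF cyc sg] .
  have "card (insert u ?C) \<le> card V" using card_mono[OF fin] CV u by simp
  moreover have "finite ?C" using CV fin finite_subset by blast
  ultimately have cV4: "card ?C + 1 \<le> card V" using uC by simp
  define d where "d = card V - 1"
  have Sd: "S d = V"
  proof -
    have "card (S d) = card V" using Sp unfolding d_def by (simp add: min_def)
    then show ?thesis using Sp fin by (meson card_subset_eq)
  qed
  have exj: "\<exists>k. ?C \<subseteq> S k" using Sd CV by blast
  define j where "j = (LEAST k. ?C \<subseteq> S k)"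
  have Cj: "?C \<subseteq> S j" unfolding j_def using LeastI_ex[OF exj] .
  have jd: "j \<le> d" unfolding j_def using Sd CV by (simp add: Least_le)
  have j0: "j \<noteq> 0"
  proof
    assume "j = 0"
    then have "?C \<subseteq> {u}" using Cj S0 by simp
    then have "card ?C \<le> card {u}" by (intro card_mono) auto
    then have "card ?C \<le> 1" by simp
    then show False using c3 by simp
  qed
  then obtain j' where jj: "j = Suc j'" using not0_implies_Suc by blast
  have nC: "\<not> ?C \<subseteq> S j'" unfolding j_def using not_less_Least[of j' "\<lambda>k. ?C \<subseteq> S k"] jj j_def by simp
  have j'd: "1 + j' < card V" using jd jj cV4 unfolding d_def by simp
  obtain z where z: "z \<notin> S j'" "S j = insert z (S j')"
    using chain_step[OF fin Sm Sp j'd] jj by blast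
  have zC: "z \<in> ?C"
  proof -
    obtain c where c: "c \<in> ?C" "c \<notin> S j'" using nC by blast
    then have "c \<in> insert z (S j')" using Cj z(2) by blast
    then show ?thesis using c by auto
  qed
  have Cz: "?C - {z} \<subseteq> S j'" using Cj z by blast
  obtain a b where ab: "a \<noteq> b" "a \<noteq> z" "b \<noteq> z" "{z,a} \<in> F" "{z,b} \<in> F"
    using cyc_deg[OF cyc sg zC] by blast
  have abC: "a \<in> ?C" "b \<in> ?C" using ab(4,5) by blast+
  have abj: "a \<in> S j'" "b \<in> S j'" using abC Cz ab by blast+
  have ex2: "\<exists>k. a \<in> S k \<and> b \<in> S k" using abj by blast
  define b0 where "b0 = (LEAST k. a \<in> S k \<and> b \<in> S k)"
  have ab0: "a \<in> S b0" "b \<in> S b0" unfolding b0_def using LeastI_ex[OF ex2] by blast+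
  have b0j: "b0 \<le> j'" unfolding b0_def using abj by (simp add: Least_le)
  have b00: "b0 \<noteq> 0" using ab0 S0 abC uC by auto
  have b01: "b0 \<noteq> 1"
  proof
    assume "b0 = 1"
    then have sub: "{u,a,b} \<subseteq> S 1" using ab0 chain_mono[OF Sm, of 0 1] S0 by auto
    have "u \<noteq> a" "u \<noteq> b" using abC uC by blast+
    then have "card {u,a,b} = 3" using ab by simp
    moreover have "card (S 1) \<le> 2" using Sp by (simp add: min_def)
    moreover have "finite (S 1)" using Sp fin finite_subset by blast
    ultimately show False using card_mono[OF _ sub] by fastforce
  qed
  obtain p where pp: "b0 = Suc p" using b00 not0_implies_Suc by blast
  have p1: "1 \<le> p" using pp b01 by simp
  have np: "\<not> (a \<in> S p \<and> b \<in> S p)" unfolding b0_def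
    using not_less_Least[of p "\<lambda>k. a \<in> S k \<and> b \<in> S k"] pp b0_def by simp
  have pd: "1 + p < card V" using b0j j'd pp by simp
  obtain t where t: "t \<notin> S p" "S b0 = insert t (S p)"
    using chain_step[OF fin Sm Sp pd] pp by blast
  obtain r where r: "r \<in> S p" "{z,r} \<in> F"
  proof (cases "a \<in> S p")
    case True then show ?thesis using that ab(4) by blast
  next
    case False
    then have "a = t" using ab0(1) t(2) by auto
    then have "b \<in> S p" using ab0(2) t(2) ab(1) by auto
    then show ?thesis using that ab(5) by blast
  qed
  have FE: "F \<subseteq> E" using cyc unfolding is_cycle_def by blast
  have Spj: "S p \<subseteq> S j'" using chain_mono[OF Sm, of p j'] pp b0j by simp
  have Sb0j: "S b0 \<subseteq> S j'" using chain_mono[OF Sm, of b0 j'] b0j by simp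
  have zp: "z \<notin> S p" using Spj z by blast
  have zb0: "z \<notin> S b0" using Sb0j z by blast
  have zV: "z \<in> V" using zC CV by blast
  define T2 where "T2 = insert z (S p)"
  have cT2: "connected_set E T2" unfolding T2_def
    using conn_insert[of E "S p" r z] Sp r FE by blast
  have finSp: "finite (S p)" using Sp fin finite_subset by blast
  have cardT2: "card T2 = card (S b0)" unfolding T2_def using t finSp zp by simp
  have cb0: "card (S b0) = 1 + b0" using Sp pd pp by (simp add: min_def)
  have uSp: "u \<in> S p" using chain_mono[OF Sm, of 0 p] S0 by auto
  have uSb0: "u \<in> S b0" using chain_mono[OF Sm, of 0 b0] S0 by auto
  show ?thesis
  proof (intro exI conjI)
    show "3 \<le> card (S b0)" using cb0 pp p1 by simp
    show "card (S b0) \<le> card V" using cb0 pd pp by simp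
    show "S b0 \<noteq> T2" using zb0 unfolding T2_def by blast
    show "S b0 \<subseteq> V" "connected_set E (S b0)" using Sp by blast+
    show "{u} \<subseteq> S b0" using uSb0 by simp
    show "T2 \<subseteq> V" unfolding T2_def using Sp zV by blast
    show "connected_set E T2" using cT2 .
    show "{u} \<subseteq> T2" using uSp unfolding T2_def by simp
    show "card T2 = card (S b0)" using cardT2 .
  qed simp
qed



lemma tri_part: "(\<exists>i. {x,y} = {i, (i+1) mod 3} \<and> i < (3::nat)) \<longleftrightarrow> x \<noteq> y \<and> x < 3 \<and> y < 3"
proof
  assume "\<exists>i. {x,y} = {i, (i+1) mod 3} \<and> i < (3::nat)"
  then obtain i where i: "{x,y} = {i, (i+1) mod 3}" "i < 3" by blast
  then have "i = 0 \<or> i = 1 \<or> i = 2" by auto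
  then show "x \<noteq> y \<and> x < 3 \<and> y < 3" using i(1) by (auto simp: doubleton_eq_iff)
next
  assume h: "x \<noteq> y \<and> x < 3 \<and> y < 3"
  then have "(x = 0 \<or> x = 1 \<or> x = 2) \<and> (y = 0 \<or> y = 1 \<or> y = 2)" by auto
  then show "\<exists>i. {x,y} = {i, (i+1) mod 3} \<and> i < (3::nat)"
  proof (elim conjE disjE)
  qed (use h in \<open>auto intro: exI[of _ 0] exI[of _ 1] exI[of _ 2] simp: insert_commute\<close>)
qed

lemma path_part: "(\<exists>i. {x,y} = {i, i+1} \<and> 3 - 1 \<le> i \<and> i + 1 < 3 + q) \<longleftrightarrow>
   (2 \<le> min x y \<and> max x y < q + 3 \<and> (y = x + 1 \<or> x = (y::nat) + 1))"
proof
  assume "\<exists>i. {x,y} = {i, i+1} \<and> 3 - 1 \<le> i \<and> i + 1 < 3 + q"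
  then obtain i where "{x,y} = {i, i+1}" "2 \<le> i" "i + 1 < 3 + q" by auto
  then show "2 \<le> min x y \<and> max x y < q + 3 \<and> (y = x + 1 \<or> x = (y::nat) + 1)"
    by (auto simp: doubleton_eq_iff)
next
  assume h: "2 \<le> min x y \<and> max x y < q + 3 \<and> (y = x + 1 \<or> x = (y::nat) + 1)"
  show "\<exists>i. {x,y} = {i, i+1} \<and> 3 - 1 \<le> i \<and> i + 1 < 3 + q"
  proof (cases "y = x + 1")
    case True then show ?thesis using h by (intro exI[of _ x]) auto
  next
    case False then show ?thesis using h by (intro exI[of _ y]) (auto simp: insert_commute)
  qed
qed

lemma tE_char: "{x,y} \<in> tadpole_E 3 q \<longleftrightarrow>
   x \<noteq> y \<and> ((x < 3 \<and> y < 3) \<or> (2 \<le> min x y \<and> max x y < q + 3 \<and> (y = x + 1 \<or> x = (y::nat) + 1)))"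
proof -
  have "{x,y} \<in> tadpole_E 3 q \<longleftrightarrow> (\<exists>i. {x,y} = {i, (i+1) mod 3} \<and> i < (3::nat)) \<or>
     (\<exists>i. {x,y} = {i, i+1} \<and> 3 - 1 \<le> i \<and> i + 1 < 3 + q)"
    unfolding tadpole_E_def by blast
  then show ?thesis unfolding tri_part path_part by auto
qed



lemma tV: "tadpole_V 3 q = {0..<q+3}" by (simp add: tadpole_V_def add.commute)

lemma tE_small: "x < 3 \<Longrightarrow> y < 3 \<Longrightarrow> ({x,y} \<in> tadpole_E 3 q \<longleftrightarrow> x \<noteq> y)"
  by (simp add: tE_char)

lemma tE_leaf: "x < q + 4 \<Longrightarrow> ({q+3, x} \<in> tadpole_E 3 (Suc q) \<longleftrightarrow> x = q + 2)"
  by (auto simp: tE_char)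

lemma tE_restr: "x < q + 3 \<Longrightarrow> y < q + 3 \<Longrightarrow> ({x,y} \<in> tadpole_E 3 (Suc q) \<longleftrightarrow> {x,y} \<in> tadpole_E 3 q)"
  by (auto simp: tE_char)

lemma tE_restr': "\<forall>x\<in>{0..<q+3}. \<forall>y\<in>{0..<q+3}. {x,y} \<in> tadpole_E 3 (Suc q) \<longleftrightarrow> {x,y} \<in> tadpole_E 3 q"
  using tE_restr by auto

lemma T0_conn:
  assumes "S \<subseteq> {0..<3}" "S \<noteq> {}"
  shows "connected_set (tadpole_E 3 q) S"
  unfolding connected_set_def
proof (intro conjI ballI)
  show "S \<noteq> {}" using assms(2) .
next
  fix u v assume u: "u \<in> S" and v: "v \<in> S"
  show "(u,v) \<in> (adj_in (tadpole_E 3 q) S)\<^sup>*"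
  proof (cases "u = v")
    case True then show ?thesis by simp
  next
    case False
    have "u < 3" "v < 3" using u v assms(1) by auto
    then have "{u,v} \<in> tadpole_E 3 q" using tE_small[of u v q] False by simp
    then have "(u,v) \<in> adj_in (tadpole_E 3 q) S" using u v unfolding adj_in_def by simp
    then show ?thesis by blast
  qed
qed

lemma T_conn: "connected_set (tadpole_E 3 q) {0..<q+3}"
proof (induction q)
  case 0 then show ?case using T0_conn[of "{0..<3}" 0] by simp
next
  case (Suc q)
  have c: "connected_set (tadpole_E 3 (Suc q)) {0..<q+3}"
    using conn_cong[of "{0..<q+3}" "tadpole_E 3 (Suc q)" "tadpole_E 3 q"] tE_restr' Suc.IH by blast
  have e: "{q+3, q+2} \<in> tadpole_E 3 (Suc q)" using tE_leaf[of "q+2" q] by simp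
  have "connected_set (tadpole_E 3 (Suc q)) (insert (q+3) {0..<q+3})"
    by (rule conn_insert[OF c _ e]) simp
  moreover have "insert (q+3) {0..<q+3} = {0..<Suc q + 3}" by auto
  ultimately show ?case by simp
qed

lemma T0_N: "N_conn {0..<3} (tadpole_E 3 0) = 7"
proof -
  have "{S. S \<subseteq> {0..<3} \<and> connected_set (tadpole_E 3 0) S} = Pow {0..<3} - {{}}"
    using T0_conn unfolding connected_set_def by auto
  moreover have "card (Pow {0..<3::nat} - {{}}) = 7"
    by (simp add: card_Diff_singleton card_Pow)
  ultimately show ?thesis unfolding N_conn_def by simp
qed

lemma T0_cnt:
  assumes w: "w < 3"
  shows "cnt (tadpole_E 3 q) {0..<3} {w} = 4"
proof -
  have "{T. T \<subseteq> {0..<3} \<and> connected_set (tadpole_E 3 q) T \<and> {w} \<subseteq> T} = insert w ` Pow ({0..<3} - {w})"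
  proof (intro equalityI subsetI)
    fix T assume "T \<in> {T. T \<subseteq> {0..<3} \<and> connected_set (tadpole_E 3 q) T \<and> {w} \<subseteq> T}"
    then have "T \<subseteq> {0..<3}" "w \<in> T" by auto
    then have "T = insert w (T - {w})" "T - {w} \<in> Pow ({0..<3} - {w})" by auto
    then show "T \<in> insert w ` Pow ({0..<3} - {w})" by blast
  next
    fix T assume "T \<in> insert w ` Pow ({0..<3} - {w})"
    then obtain T' where "T = insert w T'" "T' \<subseteq> {0..<3} - {w}" by blast
    then show "T \<in> {T. T \<subseteq> {0..<3} \<and> connected_set (tadpole_E 3 q) T \<and> {w} \<subseteq> T}"
      using T0_conn[of T q] w by auto
  qed
  moreover have "inj_on (insert w) (Pow ({0..<3} - {w}))" unfolding inj_on_def by blast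
  moreover have "card ({0..<3::nat} - {w}) = 2" using w by simp
  ultimately show ?thesis unfolding cnt_def by (simp add: card_image card_Pow)
qed

lemma T_counts:
  "2 * N_conn {0..<q+3} (tadpole_E 3 q) = q*q + 9*q + 14 \<and> cnt (tadpole_E 3 q) {0..<q+3} {q+2} = q + 4"
proof (induction q)
  case 0
  have "cnt (tadpole_E 3 0) {0..<0+3} {0+2} = 0+4" using T0_cnt[of 2 0] by (simp add: numeral_2_eq_2)
  then show ?case using T0_N by (simp del: One_nat_def)
next
  case (Suc q)
  let ?E = "tadpole_E 3 (Suc q)" and ?V = "{0..<q+4}"
  have Vm: "?V - {q+3} = {0..<q+3}" by auto
  have fin: "finite ?V" by simp
  have N1: "N_conn ?V ?E = N_conn (?V - {q+3}) ?E + cnt ?E ?V {q+3}"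
    using N_split[OF fin, of "q+3"] by simp
  have leafc: "cnt ?E ?V {q+3} = 1 + cnt ?E (?V - {q+3}) {q+2}"
    by (rule leaf_cnt) (use tE_leaf[of _ q] in auto)
  have r1: "N_conn {0..<q+3} ?E = N_conn {0..<q+3} (tadpole_E 3 q)"
    using cong_cnt_N(2)[OF tE_restr'] .
  have r2: "cnt ?E {0..<q+3} {q+2} = cnt (tadpole_E 3 q) {0..<q+3} {q+2}"
    using cong_cnt_N(1)[OF tE_restr'] .
  have e1: "cnt ?E ?V {q+3} = q + 5" using leafc Vm r2 Suc.IH by simp
  have e2: "N_conn ?V ?E = N_conn {0..<q+3} (tadpole_E 3 q) + (q + 5)"
    using N1 Vm r1 e1 by simp
  have v: "{0..<Suc q+3} = ?V" and z: "{Suc q + 2} = {q+3}" by auto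
  have g1: "cnt ?E {0..<Suc q+3} {Suc q + 2} = Suc q + 4" unfolding v z using e1 by simp
  have g2: "2 * N_conn {0..<Suc q+3} ?E = Suc q * Suc q + 9 * Suc q + 14"
    unfolding v using e2 Suc.IH by (simp add: algebra_simps)
  show ?case using g1 g2 by blast
qed

lemma T_end: "k = q + 2 \<Longrightarrow> cnt (tadpole_E 3 q) {0..<q+3} {k} = q + 4"
  using T_counts by blast

lemma T_N: "2 * N_conn {0..<q+3} (tadpole_E 3 q) = q*q + 9*q + 14"
  using T_counts by blast

lemma cnt_ge1:
  assumes "finite V" "T \<subseteq> V" "connected_set E T" "S0 \<subseteq> T"
  shows "1 \<le> cnt E V S0"
proof -
  have "T \<in> {T. T \<subseteq> V \<and> connected_set E T \<and> S0 \<subseteq> T}" using assms by simp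
  then have "{T. T \<subseteq> V \<and> connected_set E T \<and> S0 \<subseteq> T} \<noteq> {}" by blast
  then show ?thesis unfolding cnt_def using finite_fam[OF assms(1)]
    by (simp add: Suc_le_eq card_gt_0_iff)
qed

lemma cnt_ge2:
  assumes "finite V" "T1 \<subseteq> V" "connected_set E T1" "S0 \<subseteq> T1"
     "T2 \<subseteq> V" "connected_set E T2" "S0 \<subseteq> T2" "T1 \<noteq> T2"
  shows "2 \<le> cnt E V S0"
proof -
  have "{T1,T2} \<subseteq> {T. T \<subseteq> V \<and> connected_set E T \<and> S0 \<subseteq> T}" using assms by simp
  from card_mono[OF finite_fam[OF assms(1)] this] show ?thesis unfolding cnt_def using assms(8) by simp
qed

lemma T_split:
  assumes "w < q + 3"
  shows "cnt (tadpole_E 3 (Suc q)) {0..<q+4} {w} = cnt (tadpole_E 3 q) {0..<q+3} {w}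
     + cnt (tadpole_E 3 (Suc q)) {0..<q+4} {q+3, w}"
proof -
  have Vm: "{0..<q+4} - {q+3} = {0..<q+3}" by auto
  have "cnt (tadpole_E 3 (Suc q)) {0..<q+4} {w} = cnt (tadpole_E 3 (Suc q)) ({0..<q+4} - {q+3}) {w}
     + cnt (tadpole_E 3 (Suc q)) {0..<q+4} (insert (q+3) {w})"
    using cnt_split[of "{0..<q+4}"] by simp
  then show ?thesis using Vm cong_cnt_N(1)[OF tE_restr'] by simp
qed

lemma T_cnt_big: "w < q + 4 \<Longrightarrow> w \<noteq> q + 3 \<Longrightarrow> q + 6 \<le> cnt (tadpole_E 3 (Suc q)) {0..<q+4} {w}"
proof (induction q arbitrary: w)
  case 0
  then have w: "w < 3" by simp
  let ?E = "tadpole_E 3 (Suc 0)"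
  have s: "cnt ?E {0..<4} {w} = 4 + cnt ?E {0..<4} {3, w}"
    using T_split[of w 0] w T0_cnt[OF w] by simp
  have e23: "{2,3} \<in> ?E" using tE_leaf[of 2 0] by (simp add: insert_commute)
  have c23: "connected_set ?E {2,3}"
    using conn_insert[of ?E "{3}" 3 2] conn_single[of ?E 3] e23 by simp
  have cw: "connected_set ?E {w,2,3}"
  proof (cases "w = 2")
    case True then show ?thesis using c23 by simp
  next
    case False
    have "{w,2} \<in> ?E" using tE_small[of w 2 1] w False by simp
    then show ?thesis using conn_insert[OF c23, of 2 w] by simp
  qed
  have "card {w,2,3::nat} \<le> 3" by (rule order_trans[OF card_insert_le_m1]) auto
  then have ne: "{w,2,3} \<noteq> {0..<4::nat}" by fastforce
  have "2 \<le> cnt ?E {0..<4} {3, w}"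
    by (rule cnt_ge2[of _ "{w,2,3}" _ _ "{0..<4}"]) (use cw T_conn[of 1] ne w in auto)
  then show ?case using s by simp
next
  case (Suc q)
  let ?E = "tadpole_E 3 (Suc (Suc q))" and ?V = "{0..<q+5}"
  have w: "w < Suc q + 3" using Suc.prems by simp
  have s: "cnt ?E {0..<Suc q+4} {w} = cnt (tadpole_E 3 (Suc q)) {0..<Suc q+3} {w}
     + cnt ?E {0..<Suc q+4} {Suc q+3, w}" using T_split[OF w] .
  have cV: "connected_set ?E {0..<Suc q+4}" using T_conn[of "Suc (Suc q)"] by (simp add: add.commute)
  show ?case
  proof (cases "w = q + 3")
    case True
    have ce: "cnt (tadpole_E 3 (Suc q)) {0..<Suc q+3} {w} = q + 5"
      using T_end[of w "Suc q"] True by simp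
    have e34: "{q+3, q+4} \<in> ?E" using tE_leaf[of "q+3" "Suc q"] by (simp add: insert_commute add.commute)
    have c: "connected_set ?E {q+3, q+4}"
      using conn_insert[of ?E "{q+4}" "q+4" "q+3"] conn_single[of ?E "q+4"] e34 by simp
    have "(0::nat) \<in> {0..<Suc q+4}" "(0::nat) \<notin> {q+3, q+4}" by simp_all
    then have ne: "{q+3, q+4} \<noteq> {0..<Suc q+4}" by blast
    have "2 \<le> cnt ?E {0..<Suc q+4} {Suc q+3, w}"
      by (rule cnt_ge2[of _ "{q+3,q+4}" _ _ "{0..<Suc q+4}"]) (use c cV ne True in auto)
    then show ?thesis using s ce by simp
  next
    case False
    have IH: "q + 6 \<le> cnt (tadpole_E 3 (Suc q)) {0..<Suc q+3} {w}"
      using Suc.IH[of w] False w by (simp add: add.commute)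
    have "1 \<le> cnt ?E {0..<Suc q+4} {Suc q+3, w}"
      by (rule cnt_ge1[of _ "{0..<Suc q+4}"]) (use cV w in auto)
    then show ?thesis using s IH by simp
  qed
qed



lemma rtrancl_map_gen:
  assumes "(a,b) \<in> R\<^sup>*" "\<And>x y. (x,y) \<in> R \<Longrightarrow> (g x, g y) \<in> R'"
  shows "(g a, g b) \<in> R'\<^sup>*"
  using assms(1)
proof (induction rule: rtrancl_induct)
  case base then show ?case by simp
next
  case (step y z)
  then show ?case using assms(2) by (meson rtrancl.rtrancl_into_rtrancl)
qed

lemma iso_conn:
  assumes inj: "inj_on f V" and ed: "\<forall>u\<in>V. \<forall>v\<in>V. {u,v} \<in> E \<longleftrightarrow> {f u, f v} \<in> E'" and S: "S \<subseteq> V"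
  shows "connected_set E S \<longleftrightarrow> connected_set E' (f ` S)"
proof
  assume c: "connected_set E S"
  show "connected_set E' (f ` S)" unfolding connected_set_def
  proof (intro conjI ballI)
    show "f ` S \<noteq> {}" using c unfolding connected_set_def by simp
  next
    fix a' b' assume "a' \<in> f ` S" "b' \<in> f ` S"
    then obtain a b where ab: "a \<in> S" "b \<in> S" "a' = f a" "b' = f b" by blast
    have p: "(a,b) \<in> (adj_in E S)\<^sup>*" using c ab unfolding connected_set_def by blast
    have m: "(f x, f y) \<in> adj_in E' (f ` S)" if "(x,y) \<in> adj_in E S" for x y
      using that ed S unfolding adj_in_def by auto
    from rtrancl_map_gen[OF p m] show "(a',b') \<in> (adj_in E' (f ` S))\<^sup>*" using ab by simp
  qed
next
  assume c: "connected_set E' (f ` S)"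
  let ?g = "inv_into S f"
  have injS: "inj_on f S" using inj S inj_on_subset by blast
  show "connected_set E S" unfolding connected_set_def
  proof (intro conjI ballI)
    show "S \<noteq> {}" using c unfolding connected_set_def by simp
  next
    fix a b assume ab: "a \<in> S" "b \<in> S"
    have p: "(f a, f b) \<in> (adj_in E' (f ` S))\<^sup>*" using c ab unfolding connected_set_def by blast
    have m: "(?g x, ?g y) \<in> adj_in E S" if xy: "(x,y) \<in> adj_in E' (f ` S)" for x y
    proof -
      obtain x0 y0 where x0: "x0 \<in> S" "x = f x0" and y0: "y0 \<in> S" "y = f y0" and e: "{f x0, f y0} \<in> E'"
        using xy unfolding adj_in_def by auto
      have "?g x = x0" "?g y = y0" using x0 y0 injS by (auto simp: inv_into_f_f)
      moreover have "{x0,y0} \<in> E" using ed x0 y0 e S by blast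
      ultimately show ?thesis using x0 y0 unfolding adj_in_def by simp
    qed
    from rtrancl_map_gen[OF p m] have "(?g (f a), ?g (f b)) \<in> (adj_in E S)\<^sup>*" .
    then show "(a,b) \<in> (adj_in E S)\<^sup>*" using ab injS by (simp add: inv_into_f_f)
  qed
qed

lemma iso_counts:
  assumes bij: "bij_betw f V V'" and ed: "\<forall>u\<in>V. \<forall>v\<in>V. {u,v} \<in> E \<longleftrightarrow> {f u, f v} \<in> E'"
  shows "N_conn V E = N_conn V' E'" and "u \<in> V \<Longrightarrow> cnt E V {u} = cnt E' V' {f u}"
proof -
  have inj: "inj_on f V" and im: "f ` V = V'" using bij unfolding bij_betw_def by auto
  have injI: "inj_on ((`) f) A" if "A \<subseteq> Pow V" for A
  proof -
    have "\<Union>A \<subseteq> V" using that by blast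
    then have "inj_on f (\<Union>A)" using inj inj_on_subset by blast
    then show ?thesis using inj_on_image[of f A] by blast
  qed
  have key: "{S'. S' \<subseteq> V' \<and> P' S'} = (`) f ` {S. S \<subseteq> V \<and> P S}"
    if PP: "\<And>S. S \<subseteq> V \<Longrightarrow> P' (f ` S) \<longleftrightarrow> P S" for P P'
  proof (intro equalityI subsetI)
    fix S' assume "S' \<in> {S'. S' \<subseteq> V' \<and> P' S'}"
    then have S': "S' \<subseteq> V'" "P' S'" by auto
    let ?S = "inv_into V f ` S'"
    have sub: "?S \<subseteq> V" using S' im by (auto intro: inv_into_into)
    have fS: "f ` ?S = S'" using S' im by (simp add: image_inv_into_cancel)
    then have "P ?S" using PP[OF sub] S' by simp
    then show "S' \<in> (`) f ` {S. S \<subseteq> V \<and> P S}" using sub fS by blast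
  next
    fix S' assume "S' \<in> (`) f ` {S. S \<subseteq> V \<and> P S}"
    then obtain S where "S \<subseteq> V" "P S" "S' = f ` S" by blast
    then show "S' \<in> {S'. S' \<subseteq> V' \<and> P' S'}" using PP im by blast
  qed
  have "{S'. S' \<subseteq> V' \<and> connected_set E' S'} = (`) f ` {S. S \<subseteq> V \<and> connected_set E S}"
    by (rule key) (use iso_conn[OF inj ed] in blast)
  moreover have "inj_on ((`) f) {S. S \<subseteq> V \<and> connected_set E S}" by (rule injI) blast
  ultimately show "N_conn V E = N_conn V' E'" unfolding N_conn_def by (simp add: card_image)
  assume u: "u \<in> V"
  have "{S'. S' \<subseteq> V' \<and> (connected_set E' S' \<and> {f u} \<subseteq> S')} = (`) f ` {S. S \<subseteq> V \<and> (connected_set E S \<and> {u} \<subseteq> S)}"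
  proof (rule key)
    fix S assume S: "S \<subseteq> V"
    have "f u \<in> f ` S \<longleftrightarrow> u \<in> S" using inj S u by (auto simp: inj_on_image_mem_iff)
    then show "(connected_set E' (f ` S) \<and> {f u} \<subseteq> f ` S) \<longleftrightarrow> (connected_set E S \<and> {u} \<subseteq> S)"
      using iso_conn[OF inj ed S] by simp
  qed
  moreover have "inj_on ((`) f) {S. S \<subseteq> V \<and> (connected_set E S \<and> {u} \<subseteq> S)}" by (rule injI) blast
  ultimately show "cnt E V {u} = cnt E' V' {f u}" unfolding cnt_def by (simp add: card_image conj_assoc)
qed

lemma graph_iso_counts:
  assumes "graph_iso V E V' E'"
  shows "N_conn V E = N_conn V' E'"
  using assms iso_counts(1) unfolding graph_iso_def by blast



lemma tri_adjust:
  assumes bij: "bij_betw f V {0..<3}" and ed: "\<forall>a\<in>V. \<forall>b\<in>V. {a,b} \<in> E \<longleftrightarrow> {f a, f b} \<in> tadpole_E 3 0"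
    and u: "u \<in> V"
  shows "\<exists>g. bij_betw g V {0..<3} \<and> (\<forall>a\<in>V. \<forall>b\<in>V. {a,b} \<in> E \<longleftrightarrow> {g a, g b} \<in> tadpole_E 3 0) \<and> g u = 2"
proof -
  define c where "c = f u"
  have c3: "c < 3" using bij u unfolding c_def bij_betw_def by auto
  define \<sigma> where "\<sigma> x = (if x = c then 2 else if x = 2 then c else (x::nat))" for x
  have ss: "\<sigma> (\<sigma> x) = x" for x unfolding \<sigma>_def by auto
  have inj: "inj \<sigma>" by (metis ss injI)
  have lt: "x < 3 \<Longrightarrow> \<sigma> x < 3" for x unfolding \<sigma>_def using c3 by auto
  have bs: "bij_betw \<sigma> {0..<3} {0..<3}"
  proof (rule bij_betw_imageI)
    show "inj_on \<sigma> {0..<3}" using inj inj_on_subset by blast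
    show "\<sigma> ` {0..<3} = {0..<3}"
    proof (intro equalityI subsetI)
      fix y assume "y \<in> \<sigma> ` {0..<3}" then show "y \<in> {0..<3}" using lt by auto
    next
      fix y assume "y \<in> {0..<(3::nat)}"
      then have "\<sigma> y \<in> {0..<3}" "\<sigma> (\<sigma> y) = y" using lt ss by auto
      then show "y \<in> \<sigma> ` {0..<3}" by (metis imageI)
    qed
  qed
  define g where "g = \<sigma> \<circ> f"
  have bg: "bij_betw g V {0..<3}" unfolding g_def using bij_betw_trans[OF bij bs] .
  have fl: "a \<in> V \<Longrightarrow> f a < 3" for a using bij unfolding bij_betw_def by auto
  have "\<forall>a\<in>V. \<forall>b\<in>V. {a,b} \<in> E \<longleftrightarrow> {g a, g b} \<in> tadpole_E 3 0"
  proof (intro ballI)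
    fix a b assume a: "a \<in> V" and b: "b \<in> V"
    have "{a,b} \<in> E \<longleftrightarrow> f a \<noteq> f b" using ed a b tE_small[OF fl[OF a] fl[OF b]] by blast
    also have "\<dots> \<longleftrightarrow> \<sigma> (f a) \<noteq> \<sigma> (f b)" using inj by (metis injD)
    also have "\<dots> \<longleftrightarrow> {g a, g b} \<in> tadpole_E 3 0"
      unfolding g_def using tE_small[OF lt[OF fl[OF a]] lt[OF fl[OF b]]] by simp
    finally show "{a,b} \<in> E \<longleftrightarrow> {g a, g b} \<in> tadpole_E 3 0" .
  qed
  moreover have "g u = 2" unfolding g_def \<sigma>_def c_def by simp
  ultimately show ?thesis using bg by blast
qed

lemma iso_extend:
  assumes bij: "bij_betw g (V - {w}) {0..<q+3}"
    and ed: "\<forall>a\<in>V - {w}. \<forall>b\<in>V - {w}. {a,b} \<in> {e\<in>E. w \<notin> e} \<longleftrightarrow> {g a, g b} \<in> tadpole_E 3 q"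
    and w: "w \<in> V" and u: "u \<in> V - {w}" and gu: "g u = q + 2"
    and leaf: "\<forall>x\<in>V. {w,x} \<in> E \<longleftrightarrow> x = u"
  shows "graph_iso V E (tadpole_V 3 (Suc q)) (tadpole_E 3 (Suc q))"
proof -
  define h where "h = g(w := q+3)"
  have gl: "a \<in> V - {w} \<Longrightarrow> g a < q + 3" for a using bij unfolding bij_betw_def by auto
  have ginj: "inj_on g (V - {w})" using bij unfolding bij_betw_def by auto
  have hV: "bij_betw h V {0..<q+4}"
  proof (rule bij_betw_imageI)
    show "inj_on h V"
    proof (rule inj_onI)
      fix a b assume a: "a \<in> V" and b: "b \<in> V" and e: "h a = h b"
      show "a = b"
      proof (cases "a = w")
        case True
        then show ?thesis using e gl[of b] b unfolding h_def by (cases "b = w") auto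
      next
        case False
        then show ?thesis using e gl[of a] a b ginj unfolding h_def
          by (cases "b = w") (auto dest: inj_onD)
      qed
    qed
    have "g ` (V - {w}) = {0..<q+3}" using bij unfolding bij_betw_def by auto
    moreover have "h ` V = insert (q+3) (g ` (V - {w}))"
    proof -
      have "V = insert w (V - {w})" using w by blast
      then have "h ` V = insert (h w) (h ` (V - {w}))" by (metis image_insert)
      moreover have "h ` (V - {w}) = g ` (V - {w})" unfolding h_def by auto
      ultimately show ?thesis unfolding h_def by simp
    qed
    ultimately show "h ` V = {0..<q+4}" by auto
  qed
  have edges: "{a,b} \<in> E \<longleftrightarrow> {h a, h b} \<in> tadpole_E 3 (Suc q)" if a: "a \<in> V" and b: "b \<in> V" for a b
  proof (cases "a = w")
    case aw: True
    show ?thesis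
    proof (cases "b = w")
      case True
      have "w \<noteq> u" using u by blast
      then have "{w,w} \<notin> E" using leaf w by blast
      moreover have "{q+3, q+3} \<notin> tadpole_E 3 (Suc q)" using tE_char[of "q+3" "q+3" "Suc q"] by blast
      ultimately show ?thesis using aw True unfolding h_def by simp
    next
      case False
      have "{w,b} \<in> E \<longleftrightarrow> b = u" using leaf b by blast
      also have "\<dots> \<longleftrightarrow> g b = q + 2" using ginj u b False gu by (metis DiffI empty_iff insertE inj_on_eq_iff)
      also have "\<dots> \<longleftrightarrow> {q+3, g b} \<in> tadpole_E 3 (Suc q)" using tE_leaf[of "g b" q] gl[of b] b False by simp
      finally show ?thesis using aw False unfolding h_def by simp
    qed
  next
    case awF: False
    show ?thesis
    proof (cases "b = w")
      case True
      have "{w,a} \<in> E \<longleftrightarrow> a = u" using leaf a by blast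
      also have "\<dots> \<longleftrightarrow> g a = q + 2" using ginj u a awF gu by (metis DiffI empty_iff insertE inj_on_eq_iff)
      also have "\<dots> \<longleftrightarrow> {q+3, g a} \<in> tadpole_E 3 (Suc q)" using tE_leaf[of "g a" q] gl[of a] a awF by simp
      finally show ?thesis using awF True unfolding h_def by (simp add: insert_commute)
    next
      case False
      have ab: "a \<in> V - {w}" "b \<in> V - {w}" using a b awF False by auto
      have "{a,b} \<in> E \<longleftrightarrow> {a,b} \<in> {e\<in>E. w \<notin> e}" using awF False by auto
      also have "\<dots> \<longleftrightarrow> {g a, g b} \<in> tadpole_E 3 q" using ed ab by blast
      also have "\<dots> \<longleftrightarrow> {g a, g b} \<in> tadpole_E 3 (Suc q)" using tE_restr[OF gl[OF ab(1)] gl[OF ab(2)]] by simp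
      finally show ?thesis using awF False unfolding h_def by simp
    qed
  qed
  have "tadpole_V 3 (Suc q) = {0..<q+4}" by (simp add: tV add.commute)
  then show ?thesis unfolding graph_iso_def using hV edges by auto
qed

lemma tri_iso:
  assumes fin: "finite V" and c: "card V = 3" and ed: "\<forall>a\<in>V. \<forall>b\<in>V. {a,b} \<in> E \<longleftrightarrow> a \<noteq> b"
  shows "graph_iso V E (tadpole_V 3 0) (tadpole_E 3 0)"
proof -
  obtain f where f: "bij_betw f V {0..<(3::nat)}" using ex_bij_betw_finite_nat[OF fin] c by metis
  have fl: "a \<in> V \<Longrightarrow> f a < 3" for a using f unfolding bij_betw_def by auto
  have inj: "inj_on f V" using f unfolding bij_betw_def by auto
  have "\<forall>a\<in>V. \<forall>b\<in>V. {a,b} \<in> E \<longleftrightarrow> {f a, f b} \<in> tadpole_E 3 0"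
  proof (intro ballI)
    fix a b assume a: "a \<in> V" and b: "b \<in> V"
    have "{a,b} \<in> E \<longleftrightarrow> a \<noteq> b" using ed a b by blast
    also have "\<dots> \<longleftrightarrow> f a \<noteq> f b" using inj a b by (metis inj_on_eq_iff)
    also have "\<dots> \<longleftrightarrow> {f a, f b} \<in> tadpole_E 3 0" using tE_small[OF fl[OF a] fl[OF b]] by simp
    finally show "{a,b} \<in> E \<longleftrightarrow> {f a, f b} \<in> tadpole_E 3 0" .
  qed
  moreover have "tadpole_V 3 0 = {0..<3}" by (simp add: tV)
  ultimately show ?thesis unfolding graph_iso_def using f by auto
qed

lemma unicyc_remove:
  assumes uni: "unicyclic V E" and cyc: "is_cycle E F" and w: "w \<in> V" and wC: "w \<notin> \<Union>F"
    and cw: "connected_set E (V - {w})"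
  shows "unicyclic (V - {w}) {e\<in>E. w \<notin> e}"
proof -
  let ?E = "{e\<in>E. w \<notin> e}"
  have sg: "simple_graph V E" using uni unfolding unicyclic_def by blast
  have sg': "simple_graph (V - {w}) ?E" using sg unfolding simple_graph_def by blast
  have c': "connected_set ?E (V - {w})"
    using cw conn_cong[of "V - {w}" E ?E] by auto
  have cyc': "is_cycle ?E F" using cyc wC unfolding is_cycle_def by blast
  have uniq: "G = F" if "is_cycle ?E G" for G
  proof -
    have "is_cycle E G" using that unfolding is_cycle_def by blast
    moreover have "\<exists>!F. is_cycle E F" using uni unfolding unicyclic_def by blast
    ultimately show ?thesis using cyc by blast
  qed
  show ?thesis unfolding unicyclic_def using sg' c' cyc' uniq by blast
qed



lemma cyc_nbrs:
  assumes cyc: "is_cycle E F" and sg: "simple_graph V E" and v: "v \<in> \<Union>F"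
  shows "\<exists>a b. a \<noteq> b \<and> a \<noteq> v \<and> b \<noteq> v \<and> {v,a} \<in> F \<and> {v,b} \<in> F \<and> (\<forall>s. {v,s} \<in> F \<longleftrightarrow> s = a \<or> s = b)"
proof -
  obtain a b where ab: "a \<noteq> b" "a \<noteq> v" "b \<noteq> v" "{v,a} \<in> F" "{v,b} \<in> F"
    and all: "\<forall>e\<in>F. v \<in> e \<longrightarrow> e = {v,a} \<or> e = {v,b}"
    using cyc_deg[OF cyc sg v] by blast
  have "{v,s} \<in> F \<longleftrightarrow> s = a \<or> s = b" for s
  proof
    assume vs: "{v,s} \<in> F"
    have "v \<in> {v,s}" by simp
    then have "{v,s} = {v,a} \<or> {v,s} = {v,b}" using all vs by simp
    then show "s = a \<or> s = b" using ab by (auto simp: doubleton_eq_iff)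
  next
    assume "s = a \<or> s = b" then show "{v,s} \<in> F" using ab by blast
  qed
  then show ?thesis using ab by blast
qed

lemma pure_cycle_bound:
  assumes sg: "simple_graph V E" and cyc: "is_cycle E F" and VC: "\<Union>F = V" and n: "4 \<le> card V"
  shows "card V * card V + 3 * card V \<le> 2 * N_conn V E + 2"
proof -
  let ?n = "card V"
  have fin: "finite V" using sg unfolding simple_graph_def by blast
  have FE: "F \<subseteq> E" using cyc unfolding is_cycle_def by blast
  have cF: "connected_set F V" using cyc VC unfolding is_cycle_def by blast
  obtain v0 where v0: "v0 \<in> V" using n by fastforce
  have "{v0} \<noteq> V" using n by auto
  with noncut[OF fin cF _ conn_single, of v0] v0
  obtain w where w: "w \<in> V" "w \<noteq> v0" and cw: "connected_set F (V - {w})" by blast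
  obtain x y where xy: "x \<noteq> y" "x \<noteq> w" "y \<noteq> w" "{w,x} \<in> F" "{w,y} \<in> F"
    and wn: "\<forall>s. {w,s} \<in> F \<longleftrightarrow> s = x \<or> s = y"
    using cyc_nbrs[OF cyc sg, of w] w VC by blast
  have xV: "x \<in> V" "y \<in> V" using xy VC by blast+
  obtain a b where ab: "a \<noteq> b" "a \<noteq> x" "b \<noteq> x" "{x,a} \<in> F" "{x,b} \<in> F"
    and xn: "\<forall>s. {x,s} \<in> F \<longleftrightarrow> s = a \<or> s = b"
    using cyc_nbrs[OF cyc sg, of x] xV VC by blast
  have "{x,w} \<in> F" using xy(4) by (simp add: insert_commute)
  then have "w = a \<or> w = b" using xn by blast
  then obtain x' where x': "x' \<noteq> x" "x' \<noteq> w" "{x,x'} \<in> F" and xn': "\<forall>s. {x,s} \<in> F \<longleftrightarrow> s = w \<or> s = x'"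
  proof
    assume "w = a" then show ?thesis using that[of b] ab xn by blast
  next
    assume "w = b" then show ?thesis using that[of a] ab xn by blast
  qed
  have x'V: "x' \<in> V" using x'(3) VC by blast
  have yx': "y \<noteq> x'"
  proof
    assume yx: "y = x'"
    let ?T = "{w,x,y}"
    obtain c d where cd: "c \<noteq> d" "c \<noteq> y" "d \<noteq> y" "{y,c} \<in> F" "{y,d} \<in> F"
      and yn: "\<forall>s. {y,s} \<in> F \<longleftrightarrow> s = c \<or> s = d"
      using cyc_nbrs[OF cyc sg, of y] xV VC by blast
    have "{y,w} \<in> F" "{y,x} \<in> F" using xy(5) x'(3) yx by (simp_all add: insert_commute)
    then have ywx: "w \<in> {c,d}" "x \<in> {c,d}" using yn by blast+
    have closed: "s \<in> ?T" if t: "t \<in> ?T" and e: "{s,t} \<in> F" for s t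
    proof -
      have e': "{t,s} \<in> F" using e by (simp add: insert_commute)
      show ?thesis
      proof (cases "t = w")
        case True then show ?thesis using wn e' by auto
      next
        case False
        show ?thesis
        proof (cases "t = x")
          case True then show ?thesis using xn' e' yx by auto
        next
          case False
          then have "t = y" using t \<open>t \<noteq> w\<close> by blast
          then have "s = c \<or> s = d" using yn e' by blast
          then show ?thesis using ywx xy(2) cd(1) by auto
        qed
      qed
    qed
    have TV: "?T \<subseteq> V" using w xV by blast
    have "?T = V"
    proof (rule ccontr)
      assume "?T \<noteq> V"
      then obtain s t where "s \<in> V - ?T" "t \<in> ?T" "{s,t} \<in> F"
        using outside_nbr[OF cF TV] by blast
      then show False using closed by blast
    qed
    moreover have "card ?T \<le> 3" by (simp add: card_insert_le_m1)
    ultimately show False using n by simp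
  qed
  have xw: "x \<in> V - {w}" using xV xy by blast
  have leafx: "\<forall>t\<in>V - {w}. {x,t} \<in> F \<longrightarrow> t = x'" using xn' by blast
  have ne: "(V - {w}) - {x} \<noteq> {}" using xV xy by blast
  have c2: "connected_set F ((V - {w}) - {x})"
    using leaf_remove_conn[OF cw xw x'(1) leafx ne] .
  have yin: "y \<in> (V - {w}) - {x}" using xV xy by blast
  have eyw: "{w,y} \<in> F" using xy by blast
  have "connected_set F (insert w ((V - {w}) - {x}))" using conn_insert[OF c2 yin eyw] .
  moreover have "insert w ((V - {w}) - {x}) = V - {x}" using w xy by blast
  ultimately have cx: "connected_set F (V - {x})" by simp
  have s1: "N_conn V F = N_conn (V - {w}) F + cnt F V {w}" using N_split[OF fin w(1)] .
  have s2: "cnt F V {w} = cnt F (V - {x}) {w} + cnt F V {x,w}" using cnt_split[OF fin, of F "{w}" x] by simp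
  have cm: "card (V - {w}) = ?n - 1" "card (V - {x}) = ?n - 1" using fin w xV by auto
  have b1: "(?n - 1) * (?n - 1 + 1) \<le> 2 * N_conn (V - {w}) F"
    using conn_lb[of "V - {w}" F] fin cw cm by simp
  have b2: "card (V - {x}) - card {w} + 1 + card ({}::nat set) \<le> cnt F (V - {x}) {w}"
    by (rule count_lb) (use fin cx w xy conn_single in auto)
  have cxw: "connected_set F {x,w}" using conn_insert[of F "{w}" w x] conn_single[of F w] \<open>{x,w} \<in> F\<close> by simp
  have T1: "connected_set F {y,x,w}" using conn_insert[OF cxw, of w y] eyw by (simp add: insert_commute)
  have T2: "connected_set F {x',x,w}" using conn_insert[OF cxw, of x x'] x'(3) by (simp add: insert_commute)
  have ne12: "{y,x,w} \<noteq> {x',x,w}" using yx' x' xy by auto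
  have card1: "card {y,x,w} = 3" "card {x',x,w} = 3" using xy x' by auto
  have b3: "card V - card {x,w} + 1 + card {3::nat} \<le> cnt F V {x,w}"
  proof (rule count_lb[OF fin cF])
    show "{x,w} \<subseteq> V" using xV w by blast
    show "connected_set F {x,w}" using cxw .
    show "{3} \<subseteq> {card {x,w}..card V}" using xy n by auto
    fix k assume "k \<in> {3::nat}"
    then show "\<exists>T1 T2. T1 \<noteq> T2 \<and> T1 \<subseteq> V \<and> connected_set F T1 \<and> {x,w} \<subseteq> T1 \<and> card T1 = k
                \<and> T2 \<subseteq> V \<and> connected_set F T2 \<and> {x,w} \<subseteq> T2 \<and> card T2 = k"
      using ne12 T1 T2 card1 xV x'V w by (intro exI[of _ "{y,x,w}"] exI[of _ "{x',x,w}"]) auto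
  qed
  have "card {x,w} = 2" using xy by simp
  then have b3': "?n \<le> cnt F V {x,w}" using b3 n by simp
  have b2': "?n - 1 \<le> cnt F (V - {x}) {w}" using b2 cm by simp
  have "N_conn V F \<le> N_conn V E"
  proof -
    have "{S. S \<subseteq> V \<and> connected_set F S} \<subseteq> {S. S \<subseteq> V \<and> connected_set E S}"
      using conn_mono_E[OF FE] by blast
    then show ?thesis unfolding N_conn_def using finite_fam[OF fin] by (intro card_mono) auto
  qed
  moreover have "?n * ?n + 3 * ?n \<le> 2 * N_conn V F + 2"
  proof -
    have "2 * N_conn V F = 2 * N_conn (V - {w}) F + 2 * cnt F (V - {x}) {w} + 2 * cnt F V {x,w}"
      using s1 s2 by simp
    moreover have "(?n - 1) * (?n - 1 + 1) + 2 * (?n - 1) + 2 * ?n + 2 = ?n * ?n + 3 * ?n"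
      using n by (cases ?n) (auto simp: algebra_simps)
    ultimately show ?thesis using b1 b2' b3' by linarith
  qed
  ultimately show ?thesis by linarith
qed



lemma simple_noloop: "simple_graph V E \<Longrightarrow> {a,a} \<notin> E"
  unfolding simple_graph_def by (auto simp: doubleton_eq_iff)

lemma three_complete:
  assumes uni: "unicyclic V E" and c: "card V = 3"
  shows "\<forall>a\<in>V. \<forall>b\<in>V. {a,b} \<in> E \<longleftrightarrow> a \<noteq> b"
proof -
  have sg: "simple_graph V E" using uni unfolding unicyclic_def by blast
  have fin: "finite V" using sg unfolding simple_graph_def by blast
  obtain F where cyc: "is_cycle E F" using uni unfolding unicyclic_def by blast
  have FE: "F \<subseteq> E" using cyc unfolding is_cycle_def by blast
  have CV: "\<Union>F = V"
    using card_seteq[OF fin cyc_sub[OF cyc sg]] cyc_card[OF cyc sg] c by simp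
  show ?thesis
  proof (intro ballI)
    fix a b assume a: "a \<in> V" and b: "b \<in> V"
    show "{a,b} \<in> E \<longleftrightarrow> a \<noteq> b"
    proof
      assume "{a,b} \<in> E" then show "a \<noteq> b" using simple_noloop[OF sg] by blast
    next
      assume ab: "a \<noteq> b"
      obtain x y where xy: "x \<noteq> y" "x \<noteq> a" "y \<noteq> a" "{a,x} \<in> F" "{a,y} \<in> F"
        and an: "\<forall>s. {a,s} \<in> F \<longleftrightarrow> s = x \<or> s = y"
        using cyc_nbrs[OF cyc sg, of a] a CV by blast
      have sub: "{x,y} \<subseteq> V - {a}" using xy CV by blast
      have "card (V - {a}) = 2" using c a fin by simp
      moreover have "card {x,y} = 2" using xy by simp
      ultimately have "{x,y} = V - {a}" using card_seteq[OF _ sub] fin by simp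
      then have "b = x \<or> b = y" using b ab by blast
      then show "{a,b} \<in> E" using an FE by blast
    qed
  qed
qed

lemma main_nat:
  "unicyclic V E \<Longrightarrow> card V = n \<Longrightarrow> 3 \<le> n \<Longrightarrow>
   n*n + 3*n \<le> 2 * N_conn V E + 4 \<and>
   (n*n + 3*n = 2 * N_conn V E + 4 \<longrightarrow> graph_iso V E (tadpole_V 3 (n-3)) (tadpole_E 3 (n-3)))"
proof (induction n arbitrary: V E rule: less_induct)
  case (less n)
  note uni = less.prems(1)
  have sg: "simple_graph V E" and cV: "connected_set E V" using uni unfolding unicyclic_def by blast+
  have fin: "finite V" using sg unfolding simple_graph_def by blast
  obtain F where cyc: "is_cycle E F" using uni unfolding unicyclic_def by blast
  let ?C = "\<Union>F"
  have CV: "?C \<subseteq> V" using cyc_sub[OF cyc sg] .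
  have c3: "3 \<le> card ?C" using cyc_card[OF cyc sg] .
  show ?case
  proof (cases "?C = V")
    case True
    show ?thesis
    proof (cases "n = 3")
      case n3: True
      have iso: "graph_iso V E (tadpole_V 3 0) (tadpole_E 3 0)"
        using tri_iso[OF fin _ three_complete[OF uni]] less.prems n3 by simp
      have "N_conn V E = N_conn (tadpole_V 3 0) (tadpole_E 3 0)" using graph_iso_counts[OF iso] .
      moreover have "2 * N_conn (tadpole_V 3 0) (tadpole_E 3 0) = 14" using T_N[of 0] by (simp add: tV)
      ultimately show ?thesis using n3 iso by simp
    next
      case False
      then have n4: "4 \<le> card V" using less.prems by simp
      have "card V * card V + 3 * card V \<le> 2 * N_conn V E + 2"
        using pure_cycle_bound[OF sg cyc True n4] .
      then show ?thesis using less.prems by simp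
    qed
  next
    case False
    obtain w where w: "w \<in> V - ?C" and cw: "connected_set E (V - {w})"
      using noncut[OF fin cV CV cyc_conn[OF cyc] False] by blast
    let ?E' = "{e\<in>E. w \<notin> e}" and ?V' = "V - {w}"
    have wV: "w \<in> V" and wC: "w \<notin> ?C" using w by auto
    have uni': "unicyclic ?V' ?E'" using unicyc_remove[OF uni cyc wV wC cw] .
    have cardV': "card ?V' = n - 1" using fin wV less.prems(2) by simp
    have "card ?C \<le> card ?V'" using CV wC fin by (intro card_mono) auto
    then have n1: "3 \<le> n - 1" using c3 cardV' by simp
    have IH: "(n-1)*(n-1) + 3*(n-1) \<le> 2 * N_conn ?V' ?E' + 4 \<and>
      ((n-1)*(n-1) + 3*(n-1) = 2 * N_conn ?V' ?E' + 4 \<longrightarrow>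
        graph_iso ?V' ?E' (tadpole_V 3 (n-1-3)) (tadpole_E 3 (n-1-3)))"
      using less.IH[of "n-1" ?V' ?E'] uni' cardV' n1 by simp
    have congE: "\<forall>x\<in>?V'. \<forall>y\<in>?V'. {x,y} \<in> E \<longleftrightarrow> {x,y} \<in> ?E'" by auto
    have NV': "N_conn ?V' ?E' = N_conn ?V' E" using cong_cnt_N(2)[OF congE] by simp
    have sp: "N_conn V E = N_conn ?V' E + cnt E V {w}" using N_split[OF fin wV] .
    have "{w} \<noteq> V" using n1 less.prems(2) by auto
    then obtain x0 t where x0: "x0 \<in> V - {w}" "t \<in> {w}" "{x0,t} \<in> E"
      using outside_nbr[OF cV, of "{w}"] wV by blast
    have wx0: "{w,x0} \<in> E" using x0 by (simp add: insert_commute)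
    from cycle_dup[OF fin cV sg cyc wV wC]
    obtain b where bb: "3 \<le> b \<and> b \<le> card V \<and> (\<exists>T1 T2. T1 \<noteq> T2 \<and> T1 \<subseteq> V \<and> connected_set E T1 \<and> {w} \<subseteq> T1 \<and> card T1 = b
           \<and> T2 \<subseteq> V \<and> connected_set E T2 \<and> {w} \<subseteq> T2 \<and> card T2 = b)" by (rule exE)
    have b: "3 \<le> b" "b \<le> card V" using bb by simp_all
    have bT: "\<exists>T1 T2. T1 \<noteq> T2 \<and> T1 \<subseteq> V \<and> connected_set E T1 \<and> {w} \<subseteq> T1 \<and> card T1 = b
           \<and> T2 \<subseteq> V \<and> connected_set E T2 \<and> {w} \<subseteq> T2 \<and> card T2 = b" using bb by (rule conjunct2[OF conjunct2])
    have nn: "(n-1)*(n-1) + 3*(n-1) + 2 = n*n + n" using n1 by (cases n) (auto simp: algebra_simps)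
    show ?thesis
    proof (cases "\<exists>y\<in>V. y \<noteq> x0 \<and> {w,y} \<in> E")
      case True
      then obtain y where y: "y \<in> V" "y \<noteq> x0" "{w,y} \<in> E" by blast
      have yw: "y \<noteq> w" using y simple_noloop[OF sg] by blast
      have cwx: "connected_set E {x0,w}" using conn_insert[of E "{w}" w x0] conn_single[of E w] x0 by simp
      have cwy: "connected_set E {y,w}" using conn_insert[of E "{w}" w y] conn_single[of E w] y
        by (simp add: insert_commute)
      have "card V - card {w} + 1 + card {2, b} \<le> cnt E V {w}"
      proof (rule count_lb[OF fin cV])
        show "{w} \<subseteq> V" "connected_set E {w}" using wV conn_single by auto
        show "{2, b} \<subseteq> {card {w}..card V}" using b n1 less.prems(2) by auto
        fix k assume k: "k \<in> {2, b}"
        show "\<exists>T1 T2. T1 \<noteq> T2 \<and> T1 \<subseteq> V \<and> connected_set E T1 \<and> {w} \<subseteq> T1 \<and> card T1 = k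
                \<and> T2 \<subseteq> V \<and> connected_set E T2 \<and> {w} \<subseteq> T2 \<and> card T2 = k"
        proof (cases "k = 2")
          case True
          have d: "{x0,w} \<noteq> {y,w}" using y(2) x0 yw by (auto simp: doubleton_eq_iff)
          have cc: "card {x0,w} = 2" "card {y,w} = 2" using x0 yw by auto
          have ss: "{x0,w} \<subseteq> V" "{y,w} \<subseteq> V" using x0 y wV by auto
          show ?thesis using True cwx cwy d cc ss
            by (intro exI[of _ "{x0,w}"] exI[of _ "{y,w}"]) simp
        next
          case False then show ?thesis using k bT by auto
        qed
      qed
      moreover have "card {2, b} = 2" using b by simp
      ultimately have "n + 2 \<le> cnt E V {w}" using less.prems(2) by simp
      then have "n*n + 3*n + 2 \<le> 2 * N_conn V E + 4" using IH NV' sp nn by linarith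
      then show ?thesis by simp
    next
      case False
      have leaf: "\<forall>x\<in>V. {w,x} \<in> E \<longleftrightarrow> x = x0" using False wx0 by blast
      have "card V - card {w} + 1 + card {b} \<le> cnt E V {w}"
      proof (rule count_lb[OF fin cV])
        show "{w} \<subseteq> V" "connected_set E {w}" using wV conn_single by auto
        show "{b} \<subseteq> {card {w}..card V}" using b by auto
        fix k assume k: "k \<in> {b}"
        then show "\<exists>T1 T2. T1 \<noteq> T2 \<and> T1 \<subseteq> V \<and> connected_set E T1 \<and> {w} \<subseteq> T1 \<and> card T1 = k
                \<and> T2 \<subseteq> V \<and> connected_set E T2 \<and> {w} \<subseteq> T2 \<and> card T2 = k" using bT by auto
      qed
      then have cw1: "n + 1 \<le> cnt E V {w}" using less.prems(2) n1 by simp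
      have bound: "n*n + 3*n \<le> 2 * N_conn V E + 4" using IH NV' sp nn cw1 by linarith
      moreover have "graph_iso V E (tadpole_V 3 (n-3)) (tadpole_E 3 (n-3))"
        if eq: "n*n + 3*n = 2 * N_conn V E + 4"
      proof -
        have eqN: "(n-1)*(n-1) + 3*(n-1) = 2 * N_conn ?V' ?E' + 4" and eqc: "cnt E V {w} = n + 1"
          using IH NV' sp nn cw1 eq by linarith+
        obtain g where g: "bij_betw g ?V' (tadpole_V 3 (n-4))"
          and ged: "\<forall>a\<in>?V'. \<forall>b\<in>?V'. {a,b} \<in> ?E' \<longleftrightarrow> {g a, g b} \<in> tadpole_E 3 (n-4)"
          using IH eqN unfolding graph_iso_def by (auto simp: numeral_eq_Suc)
        define q where "q = n - 4"
        have tVq: "tadpole_V 3 (n-4) = {0..<q+3}" unfolding q_def by (simp add: tV)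
        have x0V': "x0 \<in> ?V'" using x0 by blast
        have lc: "cnt E V {w} = 1 + cnt E ?V' {x0}"
          by (rule leaf_cnt[OF fin wV]) (use x0 wx0 leaf in auto)
        have cx0: "cnt ?E' ?V' {x0} = n" using lc eqc cong_cnt_N(1)[OF congE] by simp
        have cx0': "cnt (tadpole_E 3 q) {0..<q+3} {g x0} = q + 4"
          using iso_counts(2)[OF g ged x0V'] cx0 tVq n1 unfolding q_def by simp
        obtain g' where g': "bij_betw g' ?V' {0..<q+3}"
          and ged': "\<forall>a\<in>?V'. \<forall>b\<in>?V'. {a,b} \<in> ?E' \<longleftrightarrow> {g' a, g' b} \<in> tadpole_E 3 q"
          and gx: "g' x0 = q + 2"
        proof (cases "q = 0")
          case True
          have "\<exists>g'. bij_betw g' ?V' {0..<3} \<and> (\<forall>a\<in>?V'. \<forall>b\<in>?V'. {a,b} \<in> ?E' \<longleftrightarrow> {g' a, g' b} \<in> tadpole_E 3 0) \<and> g' x0 = 2"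
            by (rule tri_adjust) (use g ged tVq True x0V' q_def in auto)
          then show ?thesis using that True by auto
        next
          case False
          then obtain q' where q': "q = Suc q'" using not0_implies_Suc by blast
          have gl: "g x0 < q + 3" using g x0V' tVq unfolding bij_betw_def by auto
          have "g x0 = q + 2"
          proof (rule ccontr)
            assume "g x0 \<noteq> q + 2"
            then have "q' + 6 \<le> cnt (tadpole_E 3 (Suc q')) {0..<q'+4} {g x0}"
              using T_cnt_big[of "g x0" q'] gl q' by simp
            then show False using cx0' q' by (simp add: add.commute)
          qed
          then show ?thesis using that g ged tVq unfolding q_def by auto
        qed
        have "graph_iso V E (tadpole_V 3 (Suc q)) (tadpole_E 3 (Suc q))"
          by (rule iso_extend[OF g' ged' wV _ gx]) (use x0V' leaf in auto)
        moreover have "Suc q = n - 3" unfolding q_def using n1 by simp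
        ultimately show ?thesis by simp
      qed
      ultimately show ?thesis by blast
    qed
  qed
qed



theorem mainTheorem7:
  fixes V :: "'a set" and E :: "'a set set" and n :: nat
  assumes "unicyclic V E" and "n = card V" and "n \<ge> 3"
  shows "real (N_conn V E) \<ge> (real n ^ 2 + 3 * real n - 4) / 2
     \<and> (real (N_conn V E) = (real n ^ 2 + 3 * real n - 4) / 2
          \<longleftrightarrow> graph_iso V E (tadpole_V 3 (n - 3)) (tadpole_E 3 (n - 3)))"
proof -
  have M: "n*n + 3*n \<le> 2 * N_conn V E + 4 \<and>
   (n*n + 3*n = 2 * N_conn V E + 4 \<longrightarrow> graph_iso V E (tadpole_V 3 (n-3)) (tadpole_E 3 (n-3)))"
    using main_nat[OF assms(1) assms(2)[symmetric] assms(3)] .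
  have conv: "n*n + 3*n = 2 * N_conn V E + 4" if iso: "graph_iso V E (tadpole_V 3 (n - 3)) (tadpole_E 3 (n - 3))"
  proof -
    obtain k where k: "n = k + 3" using assms(3) by (metis add.commute le_Suc_ex)
    have "N_conn V E = N_conn {0..<k+3} (tadpole_E 3 k)" using graph_iso_counts[OF iso] k by (simp add: tV)
    then have "2 * N_conn V E = k*k + 9*k + 14" using T_N[of k] by simp
    then show ?thesis using k by (simp add: algebra_simps)
  qed
  have r1: "real (n*n + 3*n) \<le> real (2 * N_conn V E + 4)" using M by (simp only: of_nat_le_iff)
  have A: "real (N_conn V E) \<ge> (real n ^ 2 + 3 * real n - 4) / 2"
    using r1 by (simp add: power2_eq_square)
  have B: "real (N_conn V E) = (real n ^ 2 + 3 * real n - 4) / 2 \<longleftrightarrow> n*n + 3*n = 2 * N_conn V E + 4"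
  proof -
    have "real (N_conn V E) = (real n ^ 2 + 3 * real n - 4) / 2 \<longleftrightarrow> real (n*n + 3*n) = real (2 * N_conn V E + 4)"
      by (simp add: power2_eq_square) linarith
    also have "\<dots> \<longleftrightarrow> n*n + 3*n = 2 * N_conn V E + 4" by (simp only: of_nat_eq_iff)
    finally show ?thesis .
  qed
  show ?thesis using A B M conv by blast
qed


end
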